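(* Let $\mathbb{C}$ be a pointed category with binary products. For objects $A,B$ write $\pi_1\colon A\times B\to A$, $\pi_2\colon A\times B\to B$ for the product projections, $\iota_1=(1_A,0)\colon A\to A\times B$ and $\iota_2=(0,1_B)\colon B\to A\times B$, and for morphisms $u\colon X\to A$, $v\colon X\to B$ write $(u,v)\colon X\to A\times B$ for the induced morphism; $0$ denotes a zero morphism. The following conditions are equivalent: (a) for all objects $A,B,C$ and every morphism $f\colon A\times B\to C$: if $f\circ\iota_1=0$ then $f=f\circ\iota_2\circ\pi_2$ (equivalently, $\pi_2\colon A\times B\to B$ is a cokernel of $\iota_1\colon A\to A\times B$); (b) for all objects $X,Y$ and every morphism $f\colon X\times X\to Y$: if $f\circ\iota_1=0$ then $f=f\circ\iota_2\circ\pi_2$ (equivalently, $\pi_2\colon X\times X\to X$ is a cokernel of $\iota_1=(1_X,0)\colon X\to X\times X$); (c) for all objects $X,Y$ and every morphism $f\colon X\times X\to Y$: if $f\circ(1_X,0)=0$ then $f\circ(1_X,1_X)=f\circ(0,1_X)$; (d) for all objects $A,B,C,X$ and all morphisms $f\colon A\times B\to C$, $a\colon X\to A$, $b\colon X\to B$: if $f\circ(a,0)=0$ then $f\circ(a,b)=f\circ(0,b)$; (e) for all objects $X,Y,U$ and all morphisms $f\colon X\times X\to Y$, $x\colon U\to X$: if $f\circ(x,0)=0$ then $f\circ(x,x)=f\circ(0,x)$.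
   Context: A pointed category is one with a zero object; $0$ denotes the zero morphism between any two objects. *)

theory Defs
  imports Main
begin

text \<open>Categories given by objects, arrows, domain, codomain, composition and identities.
  Comp C g f denotes g after f.\<close>

record ('o, 'm) cat =
  Obj :: "'o set"
  Arr :: "'m set"
  Dom :: "'m \<Rightarrow> 'o"
  Cod :: "'m \<Rightarrow> 'o"
  Comp :: "'m \<Rightarrow> 'm \<Rightarrow> 'm"
  Id :: "'o \<Rightarrow> 'm"

definition hom :: "('o, 'm) cat \<Rightarrow> 'o \<Rightarrow> 'o \<Rightarrow> 'm set" where
  "hom C A B = {f \<in> Arr C. Dom C f = A \<and> Cod C f = B}"

definition category :: "('o, 'm) cat \<Rightarrow> bool" where
  "category C \<longleftrightarrow>
     (\<forall>f \<in> Arr C. Dom C f \<in> Obj C \<and> Cod C f \<in> Obj C) \<and>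
     (\<forall>A \<in> Obj C. Id C A \<in> hom C A A) \<and>
     (\<forall>f \<in> Arr C. \<forall>g \<in> Arr C. Cod C f = Dom C g \<longrightarrow>
        Comp C g f \<in> hom C (Dom C f) (Cod C g)) \<and>
     (\<forall>f \<in> Arr C. \<forall>g \<in> Arr C. \<forall>h \<in> Arr C. Cod C f = Dom C g \<longrightarrow> Cod C g = Dom C h \<longrightarrow>
        Comp C h (Comp C g f) = Comp C (Comp C h g) f) \<and>
     (\<forall>f \<in> Arr C. Comp C f (Id C (Dom C f)) = f \<and> Comp C (Id C (Cod C f)) f = f)"

definition zero_object :: "('o, 'm) cat \<Rightarrow> 'o \<Rightarrow> bool" where
  "zero_object C Z \<longleftrightarrow> Z \<in> Obj C \<and>
     (\<forall>A \<in> Obj C. (\<exists>!f. f \<in> hom C A Z) \<and> (\<exists>!g. g \<in> hom C Z A))"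

definition pointed_category :: "('o, 'm) cat \<Rightarrow> bool" where
  "pointed_category C \<longleftrightarrow> category C \<and> (\<exists>Z. zero_object C Z)"

definition zmor :: "('o, 'm) cat \<Rightarrow> 'o \<Rightarrow> 'o \<Rightarrow> 'm" where
  "zmor C A B = (let Z = (SOME Z. zero_object C Z)
     in Comp C (THE g. g \<in> hom C Z B) (THE f. f \<in> hom C A Z))"

record ('o, 'm) products =
  Pr :: "'o \<Rightarrow> 'o \<Rightarrow> 'o"
  Pi1 :: "'o \<Rightarrow> 'o \<Rightarrow> 'm"
  Pi2 :: "'o \<Rightarrow> 'o \<Rightarrow> 'm"

definition is_product :: "('o, 'm) cat \<Rightarrow> 'o \<Rightarrow> 'o \<Rightarrow> 'o \<Rightarrow> 'm \<Rightarrow> 'm \<Rightarrow> bool" where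
  "is_product C A B P p q \<longleftrightarrow> P \<in> Obj C \<and> p \<in> hom C P A \<and> q \<in> hom C P B \<and>
     (\<forall>X \<in> Obj C. \<forall>u \<in> hom C X A. \<forall>v \<in> hom C X B.
        \<exists>!h. h \<in> hom C X P \<and> Comp C p h = u \<and> Comp C q h = v)"

definition has_binary_products :: "('o, 'm) cat \<Rightarrow> ('o, 'm) products \<Rightarrow> bool" where
  "has_binary_products C P \<longleftrightarrow>
     (\<forall>A \<in> Obj C. \<forall>B \<in> Obj C. is_product C A B (Pr P A B) (Pi1 P A B) (Pi2 P A B))"

definition pair :: "('o, 'm) cat \<Rightarrow> ('o, 'm) products \<Rightarrow> 'o \<Rightarrow> 'o \<Rightarrow> 'o \<Rightarrow> 'm \<Rightarrow> 'm \<Rightarrow> 'm" where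
  "pair C P X A B u v = (THE h. h \<in> hom C X (Pr P A B) \<and>
     Comp C (Pi1 P A B) h = u \<and> Comp C (Pi2 P A B) h = v)"

definition iota1 :: "('o, 'm) cat \<Rightarrow> ('o, 'm) products \<Rightarrow> 'o \<Rightarrow> 'o \<Rightarrow> 'm" where
  "iota1 C P A B = pair C P A A B (Id C A) (zmor C A B)"

definition iota2 :: "('o, 'm) cat \<Rightarrow> ('o, 'm) products \<Rightarrow> 'o \<Rightarrow> 'o \<Rightarrow> 'm" where
  "iota2 C P A B = pair C P B A B (zmor C B A) (Id C B)"

definition cond_a :: "('o, 'm) cat \<Rightarrow> ('o, 'm) products \<Rightarrow> bool" where
  "cond_a C P \<longleftrightarrow> (\<forall>A \<in> Obj C. \<forall>B \<in> Obj C. \<forall>D \<in> Obj C. \<forall>f \<in> hom C (Pr P A B) D.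
     Comp C f (iota1 C P A B) = zmor C A D \<longrightarrow>
     f = Comp C f (Comp C (iota2 C P A B) (Pi2 P A B)))"

definition cond_b :: "('o, 'm) cat \<Rightarrow> ('o, 'm) products \<Rightarrow> bool" where
  "cond_b C P \<longleftrightarrow> (\<forall>X \<in> Obj C. \<forall>Y \<in> Obj C. \<forall>f \<in> hom C (Pr P X X) Y.
     Comp C f (iota1 C P X X) = zmor C X Y \<longrightarrow>
     f = Comp C f (Comp C (iota2 C P X X) (Pi2 P X X)))"

definition cond_c :: "('o, 'm) cat \<Rightarrow> ('o, 'm) products \<Rightarrow> bool" where
  "cond_c C P \<longleftrightarrow> (\<forall>X \<in> Obj C. \<forall>Y \<in> Obj C. \<forall>f \<in> hom C (Pr P X X) Y.
     Comp C f (pair C P X X X (Id C X) (zmor C X X)) = zmor C X Y \<longrightarrow>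
     Comp C f (pair C P X X X (Id C X) (Id C X)) = Comp C f (pair C P X X X (zmor C X X) (Id C X)))"

definition cond_d :: "('o, 'm) cat \<Rightarrow> ('o, 'm) products \<Rightarrow> bool" where
  "cond_d C P \<longleftrightarrow> (\<forall>A \<in> Obj C. \<forall>B \<in> Obj C. \<forall>D \<in> Obj C. \<forall>X \<in> Obj C.
     \<forall>f \<in> hom C (Pr P A B) D. \<forall>a \<in> hom C X A. \<forall>b \<in> hom C X B.
     Comp C f (pair C P X A B a (zmor C X B)) = zmor C X D \<longrightarrow>
     Comp C f (pair C P X A B a b) = Comp C f (pair C P X A B (zmor C X A) b))"

definition cond_e :: "('o, 'm) cat \<Rightarrow> ('o, 'm) products \<Rightarrow> bool" where
  "cond_e C P \<longleftrightarrow> (\<forall>X \<in> Obj C. \<forall>Y \<in> Obj C. \<forall>U \<in> Obj C.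
     \<forall>f \<in> hom C (Pr P X X) Y. \<forall>x \<in> hom C U X.
     Comp C f (pair C P U X X x (zmor C U X)) = zmor C U Y \<longrightarrow>
     Comp C f (pair C P U X X x x) = Comp C f (pair C P U X X (zmor C U X) x))"

end

theory Submission
  imports Defs
begin

locale ptd =
  fixes C :: "('o, 'm) cat" and P :: "('o, 'm) products"
  assumes pc: "pointed_category C"
    and hp: "has_binary_products C P"
begin

lemma cat: "category C" using pc unfolding pointed_category_def by blast

lemma hom_obj: "f \<in> hom C A B \<Longrightarrow> A \<in> Obj C \<and> B \<in> Obj C"
  using cat unfolding category_def hom_def by blast

lemma comp_hom: "f \<in> hom C A B \<Longrightarrow> g \<in> hom C B D \<Longrightarrow> Comp C g f \<in> hom C A D"
  using cat unfolding category_def hom_def by auto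

lemma assoc: "f \<in> hom C A B \<Longrightarrow> g \<in> hom C B D \<Longrightarrow> h \<in> hom C D E \<Longrightarrow>
   Comp C h (Comp C g f) = Comp C (Comp C h g) f"
  using cat unfolding category_def hom_def by auto

lemma id_hom: "A \<in> Obj C \<Longrightarrow> Id C A \<in> hom C A A"
  using cat unfolding category_def by blast

lemma id_r: "f \<in> hom C A B \<Longrightarrow> Comp C f (Id C A) = f"
  using cat unfolding category_def hom_def by auto

lemma id_l: "f \<in> hom C A B \<Longrightarrow> Comp C (Id C B) f = f"
  using cat unfolding category_def hom_def by auto

definition "Z0 = (SOME Z. zero_object C Z)"

lemma Z0: "zero_object C Z0"
  using pc unfolding pointed_category_def Z0_def by (metis someI_ex)

lemma Z0_obj: "Z0 \<in> Obj C" using Z0 unfolding zero_object_def by blast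

lemma to_Z: "A \<in> Obj C \<Longrightarrow> (THE f. f \<in> hom C A Z0) \<in> hom C A Z0"
  using Z0 unfolding zero_object_def by (metis theI')

lemma to_Z_uniq: "f \<in> hom C A Z0 \<Longrightarrow> (THE f. f \<in> hom C A Z0) = f"
  using Z0 hom_obj unfolding zero_object_def by (metis the1_equality)

lemma from_Z: "A \<in> Obj C \<Longrightarrow> (THE f. f \<in> hom C Z0 A) \<in> hom C Z0 A"
  using Z0 unfolding zero_object_def by (metis theI')

lemma from_Z_uniq: "f \<in> hom C Z0 A \<Longrightarrow> (THE f. f \<in> hom C Z0 A) = f"
  using Z0 hom_obj unfolding zero_object_def by (metis the1_equality)

lemma zmor_eq: "zmor C A B = Comp C (THE g. g \<in> hom C Z0 B) (THE f. f \<in> hom C A Z0)"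
  unfolding zmor_def Z0_def Let_def by simp

lemma zmor_hom: "A \<in> Obj C \<Longrightarrow> B \<in> Obj C \<Longrightarrow> zmor C A B \<in> hom C A B"
  unfolding zmor_eq by (rule comp_hom[OF to_Z from_Z])

lemma zmor_r: "h \<in> hom C X A \<Longrightarrow> B \<in> Obj C \<Longrightarrow> Comp C (zmor C A B) h = zmor C X B"
proof -
  assume h: "h \<in> hom C X A" and B: "B \<in> Obj C"
  have A: "A \<in> Obj C" "X \<in> Obj C" using h hom_obj by auto
  have "Comp C (zmor C A B) h = Comp C (THE g. g \<in> hom C Z0 B) (Comp C (THE f. f \<in> hom C A Z0) h)"
    unfolding zmor_eq using assoc[OF h to_Z[OF A(1)] from_Z[OF B]] by simp
  also have "Comp C (THE f. f \<in> hom C A Z0) h = (THE f. f \<in> hom C X Z0)"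
    using to_Z_uniq[OF comp_hom[OF h to_Z[OF A(1)]]] by simp
  finally show ?thesis unfolding zmor_eq .
qed

lemma zmor_l: "g \<in> hom C B D \<Longrightarrow> A \<in> Obj C \<Longrightarrow> Comp C g (zmor C A B) = zmor C A D"
proof -
  assume g: "g \<in> hom C B D" and A: "A \<in> Obj C"
  have B: "B \<in> Obj C" "D \<in> Obj C" using g hom_obj by auto
  have "Comp C g (zmor C A B) = Comp C (Comp C g (THE g. g \<in> hom C Z0 B)) (THE f. f \<in> hom C A Z0)"
    unfolding zmor_eq using assoc[OF to_Z[OF A] from_Z[OF B(1)] g] by simp
  also have "Comp C g (THE g. g \<in> hom C Z0 B) = (THE g. g \<in> hom C Z0 D)"
    using from_Z_uniq[OF comp_hom[OF from_Z[OF B(1)] g]] by simp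
  finally show ?thesis unfolding zmor_eq .
qed

lemma prod: "A \<in> Obj C \<Longrightarrow> B \<in> Obj C \<Longrightarrow> is_product C A B (Pr P A B) (Pi1 P A B) (Pi2 P A B)"
  using hp unfolding has_binary_products_def by blast

lemma pi1: "A \<in> Obj C \<Longrightarrow> B \<in> Obj C \<Longrightarrow> Pi1 P A B \<in> hom C (Pr P A B) A"
  using prod unfolding is_product_def by blast
lemma pi2: "A \<in> Obj C \<Longrightarrow> B \<in> Obj C \<Longrightarrow> Pi2 P A B \<in> hom C (Pr P A B) B"
  using prod unfolding is_product_def by blast

lemma pair_props:
  assumes u: "u \<in> hom C X A" and v: "v \<in> hom C X B"
  shows "pair C P X A B u v \<in> hom C X (Pr P A B) \<and> Comp C (Pi1 P A B) (pair C P X A B u v) = u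
     \<and> Comp C (Pi2 P A B) (pair C P X A B u v) = v"
proof -
  have o: "X \<in> Obj C" "A \<in> Obj C" "B \<in> Obj C" using u v hom_obj by auto
  have "\<exists>!h. h \<in> hom C X (Pr P A B) \<and> Comp C (Pi1 P A B) h = u \<and> Comp C (Pi2 P A B) h = v"
    using prod[OF o(2,3)] o(1) u v unfolding is_product_def by blast
  then show ?thesis unfolding pair_def by (rule theI')
qed

lemma pair_hom: "u \<in> hom C X A \<Longrightarrow> v \<in> hom C X B \<Longrightarrow> pair C P X A B u v \<in> hom C X (Pr P A B)"
  using pair_props by blast
lemma pair_1: "u \<in> hom C X A \<Longrightarrow> v \<in> hom C X B \<Longrightarrow> Comp C (Pi1 P A B) (pair C P X A B u v) = u"
  using pair_props by blast
lemma pair_2: "u \<in> hom C X A \<Longrightarrow> v \<in> hom C X B \<Longrightarrow> Comp C (Pi2 P A B) (pair C P X A B u v) = v"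
  using pair_props by blast

lemma pair_uniq:
  assumes h: "h \<in> hom C X (Pr P A B)" and A: "A \<in> Obj C" and B: "B \<in> Obj C"
  shows "pair C P X A B (Comp C (Pi1 P A B) h) (Comp C (Pi2 P A B) h) = h"
proof -
  have X: "X \<in> Obj C" using h hom_obj by auto
  have u: "Comp C (Pi1 P A B) h \<in> hom C X A" and v: "Comp C (Pi2 P A B) h \<in> hom C X B"
    using comp_hom[OF h pi1[OF A B]] comp_hom[OF h pi2[OF A B]] by auto
  have "\<exists>!k. k \<in> hom C X (Pr P A B) \<and> Comp C (Pi1 P A B) k = Comp C (Pi1 P A B) h \<and> Comp C (Pi2 P A B) k = Comp C (Pi2 P A B) h"
    using prod[OF A B] X u v unfolding is_product_def by blast
  then show ?thesis unfolding pair_def using h by (simp add: the1_equality)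
qed

lemma pair_comp:
  assumes u: "u \<in> hom C X A" and v: "v \<in> hom C X B" and h: "h \<in> hom C Y X"
  shows "Comp C (pair C P X A B u v) h = pair C P Y A B (Comp C u h) (Comp C v h)"
proof -
  have o: "A \<in> Obj C" "B \<in> Obj C" using u v hom_obj by auto
  have k: "Comp C (pair C P X A B u v) h \<in> hom C Y (Pr P A B)"
    using comp_hom[OF h pair_hom[OF u v]] .
  have 1: "Comp C (Pi1 P A B) (Comp C (pair C P X A B u v) h) = Comp C u h"
    using assoc[OF h pair_hom[OF u v] pi1[OF o]] pair_1[OF u v] by simp
  have 2: "Comp C (Pi2 P A B) (Comp C (pair C P X A B u v) h) = Comp C v h"
    using assoc[OF h pair_hom[OF u v] pi2[OF o]] pair_2[OF u v] by simp
  show ?thesis using pair_uniq[OF k o] 1 2 by simp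
qed

lemma pair_id: "A \<in> Obj C \<Longrightarrow> B \<in> Obj C \<Longrightarrow>
   pair C P (Pr P A B) A B (Pi1 P A B) (Pi2 P A B) = Id C (Pr P A B)"
  using pair_uniq[OF id_hom] id_r pi1 pi2 prod unfolding is_product_def by metis


lemma a_b: "cond_a C P \<Longrightarrow> cond_b C P"
  unfolding cond_a_def cond_b_def by blast

lemma d_e: "cond_d C P \<Longrightarrow> cond_e C P"
  unfolding cond_d_def cond_e_def by blast

lemma e_c: "cond_e C P \<Longrightarrow> cond_c C P"
proof -
  assume e: "cond_e C P"
  show "cond_c C P" unfolding cond_c_def
  proof (intro ballI impI)
    fix X Y f assume X: "X \<in> Obj C" and Y: "Y \<in> Obj C" and f: "f \<in> hom C (Pr P X X) Y"
      and h: "Comp C f (pair C P X X X (Id C X) (zmor C X X)) = zmor C X Y"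
    show "Comp C f (pair C P X X X (Id C X) (Id C X)) = Comp C f (pair C P X X X (zmor C X X) (Id C X))"
      using e X Y f h id_hom[OF X] unfolding cond_e_def by blast
  qed
qed

lemma b_c: "cond_b C P \<Longrightarrow> cond_c C P"
proof -
  assume b: "cond_b C P"
  show "cond_c C P" unfolding cond_c_def
  proof (intro ballI impI)
    fix X Y f assume X: "X \<in> Obj C" and Y: "Y \<in> Obj C" and f: "f \<in> hom C (Pr P X X) Y"
      and h: "Comp C f (pair C P X X X (Id C X) (zmor C X X)) = zmor C X Y"
    have fe: "f = Comp C f (Comp C (iota2 C P X X) (Pi2 P X X))"
      using b X Y f h unfolding cond_b_def iota1_def by blast
    have i: "Id C X \<in> hom C X X" using id_hom[OF X] .
    have z: "zmor C X X \<in> hom C X X" using zmor_hom[OF X X] .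
    have d: "pair C P X X X (Id C X) (Id C X) \<in> hom C X (Pr P X X)" using pair_hom[OF i i] .
    have i2: "iota2 C P X X \<in> hom C X (Pr P X X)" unfolding iota2_def using pair_hom[OF z i] .
    have p2: "Pi2 P X X \<in> hom C (Pr P X X) X" using pi2[OF X X] .
    have "Comp C f (pair C P X X X (Id C X) (Id C X))
        = Comp C (Comp C f (Comp C (iota2 C P X X) (Pi2 P X X))) (pair C P X X X (Id C X) (Id C X))"
      using fe by simp
    also have "\<dots> = Comp C f (Comp C (Comp C (iota2 C P X X) (Pi2 P X X)) (pair C P X X X (Id C X) (Id C X)))"
      using assoc[OF d comp_hom[OF p2 i2] f] by simp
    also have "\<dots> = Comp C f (Comp C (iota2 C P X X) (Comp C (Pi2 P X X) (pair C P X X X (Id C X) (Id C X))))"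
      using assoc[OF d p2 i2] by simp
    also have "\<dots> = Comp C f (Comp C (iota2 C P X X) (Id C X))"
      using pair_2[OF i i] by simp
    also have "\<dots> = Comp C f (iota2 C P X X)" using id_r[OF i2] by simp
    finally show "Comp C f (pair C P X X X (Id C X) (Id C X)) = Comp C f (pair C P X X X (zmor C X X) (Id C X))"
      unfolding iota2_def .
  qed
qed

lemma c_d: "cond_c C P \<Longrightarrow> cond_d C P"
proof -
  assume c: "cond_c C P"
  show "cond_d C P" unfolding cond_d_def
  proof (intro ballI impI)
    fix A B D X f a b assume A: "A \<in> Obj C" and B: "B \<in> Obj C" and D: "D \<in> Obj C" and X: "X \<in> Obj C"
      and f: "f \<in> hom C (Pr P A B) D" and a: "a \<in> hom C X A" and b: "b \<in> hom C X B"
      and h: "Comp C f (pair C P X A B a (zmor C X B)) = zmor C X D"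
    define p1 where "p1 = Pi1 P X X"
    define p2 where "p2 = Pi2 P X X"
    have p1: "p1 \<in> hom C (Pr P X X) X" unfolding p1_def using pi1[OF X X] .
    have p2: "p2 \<in> hom C (Pr P X X) X" unfolding p2_def using pi2[OF X X] .
    have ap: "Comp C a p1 \<in> hom C (Pr P X X) A" using comp_hom[OF p1 a] .
    have bp: "Comp C b p2 \<in> hom C (Pr P X X) B" using comp_hom[OF p2 b] .
    define k where "k = pair C P (Pr P X X) A B (Comp C a p1) (Comp C b p2)"
    have k: "k \<in> hom C (Pr P X X) (Pr P A B)" unfolding k_def using pair_hom[OF ap bp] .
    define g where "g = Comp C f k"
    have g: "g \<in> hom C (Pr P X X) D" unfolding g_def using comp_hom[OF k f] .
    have i: "Id C X \<in> hom C X X" using id_hom[OF X] .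
    have z: "zmor C X X \<in> hom C X X" using zmor_hom[OF X X] .
    have key: "\<And>u v. u \<in> hom C X X \<Longrightarrow> v \<in> hom C X X \<Longrightarrow>
       Comp C g (pair C P X X X u v) = Comp C f (pair C P X A B (Comp C a u) (Comp C b v))"
    proof -
      fix u v assume u: "u \<in> hom C X X" and v: "v \<in> hom C X X"
      have uv: "pair C P X X X u v \<in> hom C X (Pr P X X)" using pair_hom[OF u v] .
      have "Comp C g (pair C P X X X u v) = Comp C f (Comp C k (pair C P X X X u v))"
        unfolding g_def using assoc[OF uv k f] by simp
      also have "Comp C k (pair C P X X X u v) = pair C P X A B (Comp C (Comp C a p1) (pair C P X X X u v)) (Comp C (Comp C b p2) (pair C P X X X u v))"
        unfolding k_def using pair_comp[OF ap bp uv] .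
      also have "Comp C (Comp C a p1) (pair C P X X X u v) = Comp C a u"
        using assoc[OF uv p1 a] pair_1[OF u v] unfolding p1_def by simp
      also have "Comp C (Comp C b p2) (pair C P X X X u v) = Comp C b v"
        using assoc[OF uv p2 b] pair_2[OF u v] unfolding p2_def by simp
      finally show "Comp C g (pair C P X X X u v) = Comp C f (pair C P X A B (Comp C a u) (Comp C b v))" .
    qed
    have "Comp C g (pair C P X X X (Id C X) (zmor C X X)) = zmor C X D"
      using key[OF i z] id_r[OF a] zmor_l[OF b X] h by simp
    then have "Comp C g (pair C P X X X (Id C X) (Id C X)) = Comp C g (pair C P X X X (zmor C X X) (Id C X))"
      using c X D g unfolding cond_c_def by blast
    then show "Comp C f (pair C P X A B a b) = Comp C f (pair C P X A B (zmor C X A) b)"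
      using key[OF i i] key[OF z i] id_r[OF a] id_r[OF b] zmor_l[OF a X] by simp
  qed
qed

lemma d_a: "cond_d C P \<Longrightarrow> cond_a C P"
proof -
  assume d: "cond_d C P"
  show "cond_a C P" unfolding cond_a_def
  proof (intro ballI impI)
    fix A B D f assume A: "A \<in> Obj C" and B: "B \<in> Obj C" and D: "D \<in> Obj C"
      and f: "f \<in> hom C (Pr P A B) D" and h: "Comp C f (iota1 C P A B) = zmor C A D"
    define X where "X = Pr P A B"
    have X: "X \<in> Obj C" unfolding X_def using prod[OF A B] unfolding is_product_def by blast
    have p1: "Pi1 P A B \<in> hom C X A" unfolding X_def using pi1[OF A B] .
    have p2: "Pi2 P A B \<in> hom C X B" unfolding X_def using pi2[OF A B] .
    have iA: "Id C A \<in> hom C A A" using id_hom[OF A] .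
    have iB: "Id C B \<in> hom C B B" using id_hom[OF B] .
    have zAB: "zmor C A B \<in> hom C A B" using zmor_hom[OF A B] .
    have zBA: "zmor C B A \<in> hom C B A" using zmor_hom[OF B A] .
    have i1: "iota1 C P A B \<in> hom C A X" unfolding iota1_def X_def using pair_hom[OF iA zAB] .
    have i2: "iota2 C P A B \<in> hom C B X" unfolding iota2_def X_def using pair_hom[OF zBA iB] .
    have e1: "Comp C (iota1 C P A B) (Pi1 P A B) = pair C P X A B (Pi1 P A B) (zmor C X B)"
      unfolding iota1_def using pair_comp[OF iA zAB p1] id_l[OF p1] zmor_r[OF p1 B] by simp
    have e2: "Comp C (iota2 C P A B) (Pi2 P A B) = pair C P X A B (zmor C X A) (Pi2 P A B)"
      unfolding iota2_def using pair_comp[OF zBA iB p2] id_l[OF p2] zmor_r[OF p2 A] by simp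
    have "Comp C f (pair C P X A B (Pi1 P A B) (zmor C X B)) = Comp C (Comp C f (iota1 C P A B)) (Pi1 P A B)"
      using e1 assoc[OF p1 i1 f[folded X_def]] by simp
    also have "\<dots> = zmor C X D" using h zmor_r[OF p1 D] by simp
    finally have "Comp C f (pair C P X A B (Pi1 P A B) (Pi2 P A B)) = Comp C f (pair C P X A B (zmor C X A) (Pi2 P A B))"
      using d A B D X f p1 p2 unfolding cond_d_def X_def by blast
    moreover have "pair C P X A B (Pi1 P A B) (Pi2 P A B) = Id C X" unfolding X_def using pair_id[OF A B] .
    ultimately show "f = Comp C f (Comp C (iota2 C P A B) (Pi2 P A B))"
      using e2 id_r[OF f] unfolding X_def by simp
  qed
qed

end

theorem theorem1p2:
  fixes C :: "('o, 'm) cat" and P :: "('o, 'm) products"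
  assumes "pointed_category C"
    and "has_binary_products C P"
  shows "(cond_a C P \<longleftrightarrow> cond_b C P) \<and> (cond_b C P \<longleftrightarrow> cond_c C P) \<and>
         (cond_c C P \<longleftrightarrow> cond_d C P) \<and> (cond_d C P \<longleftrightarrow> cond_e C P)"
proof -
  interpret ptd C P using assms by unfold_locales
  show ?thesis using a_b b_c c_d d_a d_e e_c by blast
qed

end
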